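(* Let $\omega\in\mathbb{F}_8$ be a root of $y^3+y+1$, let $m\in\mathbb{N}$, let $\emptyset\neq L\subsetneq[m]$, and let $D=\Delta_L+\omega\Delta_L+\omega^2\Delta_L\subseteq\mathbb{F}_8^m$ and $D^*=D\setminus\{0\}$. Then $C_{D^*}$ is a $1$-weight linear code over $\mathbb{F}_8$ of length $2^{3|L|}-1$, dimension $|L|$ and minimum distance $7\cdot2^{3(|L|-1)}$. In particular it is a minimal code. Moreover, $C_{D^*}$ is a Griesmer code and hence distance optimal. If $A_i$ denotes the number of codewords of weight $i$ and $Z_i=|\{v\in\mathbb{F}_8^m: wt(c_{D^*}(v))=i\}|$ for $0\le i\le|D^*|$, then $Z_0=2^{3(m-|L|)}$ and $Z_i=Z_0A_i$.
   Context: $[m]=\{1,\dots,m\}$; $\Delta_L=\{w\in\mathbb{F}_2^m:\{i:w_i\ne0\}\subseteq L\}$. $A+\omega B+\omega^2C=\{a+\omega b+\omega^2 c: a\in A,b\in B,c\in C\}$. For an ordered finite set $P\subseteq\mathbb{F}_8^m$, $c_P(v)=(v\cdot d)_{d\in P}$ and $C_P=\{c_P(v):v\in\mathbb{F}_8^m\}$. A code is $1$-weight if all nonzero codewords have the same Hamming weight. A nonzero codeword $c$ is minimal if every nonzero codeword $c'$ with $\mathrm{Supp}(c')\subseteq\mathrm{Supp}(c)$ is a scalar multiple of $c$; a minimal code is one all of whose nonzero codewords are minimal. An $[n,k,d]$ code over $\mathbb{F}_q$ is Griesmer if $\sum_{i=0}^{k-1}\lceil d/q^i\rceil=n$; it is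 distance optimal if no $[n,k,d+1]$ linear code over $\mathbb{F}_q$ exists. *)

theory Defs
  imports "HOL-Analysis.Analysis" "HOL-Library.Function_Algebras"
begin

text \<open>Vectors of F^m are elements of 'a ^ 'n, where the finite index type 'n plays the
  role of [m] (so m = CARD('n)). The binary field F_2 is the prime subfield {0,1}.\<close>

definition dotp :: "'a::comm_ring_1 ^ 'n \<Rightarrow> 'a ^ 'n \<Rightarrow> 'a" where
  "dotp v d = (\<Sum>i\<in>UNIV. v $ i * d $ i)"

definition Delta :: "'n set \<Rightarrow> ('a::comm_ring_1 ^ 'n) set" where
  "Delta L = {w. (\<forall>i. w $ i \<in> {0, 1}) \<and> {i. w $ i \<noteq> 0} \<subseteq> L}"

definition sum3 :: "'a::comm_ring_1 \<Rightarrow> ('a ^ 'n) set \<Rightarrow> ('a ^ 'n) set \<Rightarrow> ('a ^ 'n) set \<Rightarrow> ('a ^ 'n) set" where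
  "sum3 \<omega> A B C = {(\<chi> i. a $ i + \<omega> * b $ i + \<omega>^2 * c $ i) | a b c. a \<in> A \<and> b \<in> B \<and> c \<in> C}"

text \<open>Words of length n are functions nat => 'a vanishing from position n on.\<close>

definition word_scale :: "'a::field \<Rightarrow> (nat \<Rightarrow> 'a) \<Rightarrow> (nat \<Rightarrow> 'a)" where
  "word_scale c v = (\<lambda>i. c * v i)"

definition linear_code :: "nat \<Rightarrow> (nat \<Rightarrow> 'a::field) set \<Rightarrow> bool" where
  "linear_code n C \<longleftrightarrow> C \<subseteq> {c. \<forall>i\<ge>n. c i = 0} \<and> 0 \<in> C \<and>
     (\<forall>x\<in>C. \<forall>y\<in>C. x + y \<in> C) \<and> (\<forall>a. \<forall>x\<in>C. word_scale a x \<in> C)"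

definition code_dim :: "(nat \<Rightarrow> 'a::field) set \<Rightarrow> nat" where
  "code_dim C = vector_space.dim word_scale C"

definition hamming_wt :: "(nat \<Rightarrow> 'a::zero) \<Rightarrow> nat" where
  "hamming_wt c = card {i. c i \<noteq> 0}"

definition hamming_dist :: "(nat \<Rightarrow> 'a) \<Rightarrow> (nat \<Rightarrow> 'a) \<Rightarrow> nat" where
  "hamming_dist c c' = card {i. c i \<noteq> c' i}"

definition min_dist :: "(nat \<Rightarrow> 'a) set \<Rightarrow> nat" where
  "min_dist C = Min {hamming_dist c c' | c c'. c \<in> C \<and> c' \<in> C \<and> c \<noteq> c'}"

definition code_supp :: "(nat \<Rightarrow> 'a::zero) \<Rightarrow> nat set" where
  "code_supp c = {i. c i \<noteq> 0}"

definition one_weight :: "(nat \<Rightarrow> 'a::zero) set \<Rightarrow> bool" where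
  "one_weight C \<longleftrightarrow> (\<exists>w. \<forall>c\<in>C. c \<noteq> 0 \<longrightarrow> hamming_wt c = w)"

definition minimal_codeword :: "(nat \<Rightarrow> 'a::field) set \<Rightarrow> (nat \<Rightarrow> 'a) \<Rightarrow> bool" where
  "minimal_codeword C c \<longleftrightarrow> c \<in> C \<and> c \<noteq> 0 \<and>
     (\<forall>c'\<in>C. c' \<noteq> 0 \<and> code_supp c' \<subseteq> code_supp c \<longrightarrow> (\<exists>a. c' = word_scale a c))"

definition minimal_code :: "(nat \<Rightarrow> 'a::field) set \<Rightarrow> bool" where
  "minimal_code C \<longleftrightarrow> (\<forall>c\<in>C. c \<noteq> 0 \<longrightarrow> minimal_codeword C c)"

definition is_nkd_code :: "nat \<Rightarrow> nat \<Rightarrow> nat \<Rightarrow> (nat \<Rightarrow> 'a::field) set \<Rightarrow> bool" where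
  "is_nkd_code n k d C \<longleftrightarrow> linear_code n C \<and> code_dim C = k \<and> min_dist C = d"

definition griesmer_code :: "nat \<Rightarrow> nat \<Rightarrow> nat \<Rightarrow> (nat \<Rightarrow> 'a::{field,finite}) set \<Rightarrow> bool" where
  "griesmer_code n k d C \<longleftrightarrow> is_nkd_code n k d C \<and>
     (\<Sum>i<k. \<lceil>real d / real (CARD('a)) ^ i\<rceil>) = int n"

definition distance_optimal :: "nat \<Rightarrow> nat \<Rightarrow> nat \<Rightarrow> (nat \<Rightarrow> 'a::field) set \<Rightarrow> bool" where
  "distance_optimal n k d C \<longleftrightarrow> is_nkd_code n k d C \<and>
     \<not> (\<exists>C' :: (nat \<Rightarrow> 'a) set. is_nkd_code n k (d + 1) C')"

text \<open>For an ordered finite set P (a distinct list), c_P(v) = (v . d)_{d in P}.\<close>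
definition cP :: "('a::comm_ring_1 ^ 'n) list \<Rightarrow> 'a ^ 'n \<Rightarrow> (nat \<Rightarrow> 'a)" where
  "cP P v = (\<lambda>i. if i < length P then dotp v (P ! i) else 0)"

definition CP :: "('a::comm_ring_1 ^ 'n) list \<Rightarrow> (nat \<Rightarrow> 'a) set" where
  "CP P = range (cP P)"

end

theory Submission
  imports Defs
begin


lemma dotp_add: "dotp v (d1 + d2) = dotp v d1 + dotp v d2"
  unfolding dotp_def by (simp add: distrib_left sum.distrib)

lemma dotp_add_left: "dotp (v1 + v2) d = dotp v1 d + dotp v2 d"
  unfolding dotp_def by (simp add: distrib_right sum.distrib)

lemma dotp_diff_left: "dotp (v1 - v2) d = dotp v1 d - dotp (v2::'a::comm_ring_1^'n) d"
  unfolding dotp_def by (simp add: left_diff_distrib sum_subtractf)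

lemma dotp_diff: "dotp v (d1 - d2) = dotp v d1 - dotp (v::'a::comm_ring_1^'n) d2"
  unfolding dotp_def by (simp add: right_diff_distrib sum_subtractf)

lemma dotp_scale_left: "dotp (c *s v) d = c * dotp v d"
  unfolding dotp_def by (simp add: sum_distrib_left mult.assoc)

lemma dotp_zero[simp]: "dotp v 0 = 0" "dotp 0 v = 0"
  unfolding dotp_def by simp_all

lemma dotp_axis: "dotp v (axis j x) = v $ j * x"
  unfolding dotp_def axis_def by (simp add: if_distrib cong: if_cong)

definition SL :: "'n set \<Rightarrow> ('a::comm_ring_1 ^ 'n) set" where
  "SL L = {v. \<forall>i. i \<notin> L \<longrightarrow> v $ i = 0}"

lemma card_SL:
  fixes L :: "'n::finite set"
  shows "card (SL L :: ('a::{comm_ring_1,finite} ^ 'n) set) = CARD('a) ^ card L"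
proof -
  have "bij_betw (\<lambda>v::'a^'n. restrict (\<lambda>i. v$i) L) (SL L) (PiE L (\<lambda>_. UNIV))"
    by (rule bij_betw_byWitness[where f'="\<lambda>f. (\<chi> i. if i \<in> L then f i else 0)"])
       (auto simp: SL_def vec_eq_iff PiE_def extensional_def)
  then have "card (SL L :: ('a ^ 'n) set) = card (PiE L (\<lambda>_. (UNIV::'a set)))"
    by (rule bij_betw_same_card)
  also have "\<dots> = CARD('a) ^ card L" by (simp add: card_PiE)
  finally show ?thesis .
qed

lemma fiber0_SL:
  fixes L :: "'n::finite set" and v :: "'a::{field,finite} ^ 'n"
  assumes "j \<in> L" "v $ j \<noteq> 0"
  shows "card {d \<in> SL L. dotp v d = 0} = CARD('a) ^ (card L - 1)"
proof -
  let ?g = "\<lambda>d::'a^'n. d - axis j (d $ j)"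
  let ?h = "\<lambda>d::'a^'n. d + axis j (- dotp v d / v $ j)"
  have "bij_betw ?g {d \<in> SL L. dotp v d = 0} (SL (L - {j}))"
  proof (rule bij_betw_byWitness[where f'="?h"])
    show "\<forall>a\<in>{d \<in> SL L. dotp v d = 0}. ?h (?g a) = a"
    proof
      fix a assume a: "a \<in> {d \<in> SL L. dotp v d = 0}"
      have "dotp v (?g a) = - (v $ j * a $ j)"
        using a by (simp add: dotp_diff dotp_axis)
      then have "- dotp v (?g a) / v $ j = a $ j" using assms by simp
      then show "?h (?g a) = a"
        by (simp add: vec_eq_iff axis_def)
    qed
    show "\<forall>a\<in>SL (L - {j}). ?g (?h a) = a"
      using assms by (auto simp: vec_eq_iff axis_def SL_def)
    show "?g ` {d \<in> SL L. dotp v d = 0} \<subseteq> SL (L - {j})"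
      by (auto simp: SL_def axis_def)
    show "?h ` SL (L - {j}) \<subseteq> {d \<in> SL L. dotp v d = 0}"
    proof
      fix x assume "x \<in> ?h ` SL (L - {j})"
      then obtain d where d: "d \<in> SL (L - {j})" "x = ?h d" by auto
      have "dotp v x = 0" using assms unfolding d(2) dotp_add dotp_axis by simp
      moreover have "x \<in> SL L" using d assms by (auto simp: SL_def axis_def)
      ultimately show "x \<in> {d \<in> SL L. dotp v d = 0}" by simp
    qed
  qed
  then have "card {d \<in> SL L. dotp v d = 0} = card (SL (L - {j}) :: ('a^'n) set)"
    by (rule bij_betw_same_card)
  also have "\<dots> = CARD('a) ^ (card L - 1)" using assms by (simp add: card_SL)
  finally show ?thesis .
qed



global_interpretation ws: vector_space "word_scale :: 'a::field \<Rightarrow> (nat \<Rightarrow> 'a) \<Rightarrow> (nat \<Rightarrow> 'a)"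
  by unfold_locales (auto simp: word_scale_def fun_eq_iff algebra_simps)

lemma card_span_indep:
  fixes B :: "(nat \<Rightarrow> 'a::{field,finite}) set"
  assumes fin: "finite B" and ind: "ws.independent B"
  shows "card (ws.span B) = CARD('a) ^ card B"
proof -
  let ?f = "\<lambda>u. \<Sum>v\<in>B. word_scale (u v) v"
  have sp: "ws.span B = ?f ` (PiE B (\<lambda>_. UNIV))"
  proof -
    have "ws.span B = range ?f" by (rule ws.span_finite[OF fin])
    also have "\<dots> = ?f ` (PiE B (\<lambda>_. UNIV))"
    proof
      show "range ?f \<subseteq> ?f ` (PiE B (\<lambda>_. UNIV))"
      proof
        fix x assume "x \<in> range ?f"
        then obtain u where x: "x = ?f u" by auto
        have e: "?f u = ?f (restrict u B)" by (rule sum.cong) auto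
        have "restrict u B \<in> PiE B (\<lambda>_. UNIV)" by (simp only: restrict_PiE_iff) simp
        then have "?f (restrict u B) \<in> ?f ` (PiE B (\<lambda>_. UNIV))" by (rule imageI)
        then show "x \<in> ?f ` (PiE B (\<lambda>_. UNIV))" by (simp only: x e)
      qed
    qed auto
    finally show ?thesis .
  qed
  have inj: "inj_on ?f (PiE B (\<lambda>_. UNIV))"
  proof (rule inj_onI)
    fix u u' assume u: "u \<in> PiE B (\<lambda>_. UNIV)" and u': "u' \<in> PiE B (\<lambda>_. UNIV)"
      and eq: "?f u = ?f u'"
    have "(\<Sum>v\<in>B. word_scale (u v - u' v) v) = ?f u - ?f u'"
      by (simp only: ws.scale_left_diff_distrib sum_subtractf)
    then have z: "(\<Sum>v\<in>B. word_scale (u v - u' v) v) = 0" using eq by simp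
    have "\<forall>v\<in>B. u v - u' v = 0"
      using ws.independentD[OF ind fin order_refl z] by blast
    then show "u = u'" using u u' by (auto simp: PiE_def extensional_def fun_eq_iff)
  qed
  have "card (ws.span B) = card (PiE B (\<lambda>_. (UNIV::'a set)))"
    using sp inj by (simp add: card_image)
  also have "\<dots> = CARD('a) ^ card B" by (simp add: card_PiE fin)
  finally show ?thesis .
qed

lemma card_subspace:
  fixes V :: "(nat \<Rightarrow> 'a::{field,finite}) set"
  assumes fin: "finite V" and sub: "ws.subspace V"
  shows "card V = CARD('a) ^ ws.dim V"
proof -
  obtain B where B: "B \<subseteq> V" "ws.independent B" "V \<subseteq> ws.span B" "card B = ws.dim V"
    by (rule ws.basis_exists)
  have finB: "finite B" using finite_subset[OF B(1) fin] .
  have "ws.span B \<subseteq> V" using B(1) sub by (simp add: ws.span_minimal)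
  then have "ws.span B = V" using B(3) by blast
  then show ?thesis using card_span_indep[OF finB B(2)] B(4) by simp
qed

lemma linear_code_subspace: "linear_code n C \<Longrightarrow> ws.subspace C"
  unfolding linear_code_def ws.subspace_def by blast

lemma linear_code_finite:
  fixes C :: "(nat \<Rightarrow> 'a::{field,finite}) set"
  assumes "linear_code n C" shows "finite C"
proof -
  have "C \<subseteq> {f. \<forall>x. (x \<in> {..<n} \<longrightarrow> f x \<in> UNIV) \<and> (x \<notin> {..<n} \<longrightarrow> f x = 0)}"
    using assms unfolding linear_code_def by auto
  moreover have "finite {f::nat\<Rightarrow>'a. \<forall>x. (x \<in> {..<n} \<longrightarrow> f x \<in> UNIV) \<and> (x \<notin> {..<n} \<longrightarrow> f x = 0)}"
    by (rule finite_set_of_finite_funs) auto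
  ultimately show ?thesis by (rule finite_subset)
qed



lemma card_fibers:
  assumes "finite A"
  shows "card A = (\<Sum>y\<in>g ` A. card {x\<in>A. g x = y})"
  using sum.image_gen[OF assms, of "\<lambda>_. 1::nat" g] by (simp only: card_eq_sum)

context
  fixes P :: "('a::{field,finite} ^ 'n::finite) list" and L :: "'n set"
  assumes dP: "distinct P" and sP: "set P = SL L - {0}"
begin

lemma wt_cP: "hamming_wt (cP P v) = card {d \<in> SL L. dotp v d \<noteq> 0}"
proof -
  have 1: "{i. cP P v i \<noteq> 0} = {i. i < length P \<and> dotp v (P!i) \<noteq> 0}"
    unfolding cP_def by (rule Collect_cong) simp
  have 2: "card {i. i < length P \<and> dotp v (P!i) \<noteq> 0} = card (nth P ` {i. i < length P \<and> dotp v (P!i) \<noteq> 0})"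
    by (rule card_image[symmetric], rule inj_on_nth[OF dP]) simp
  have 3: "nth P ` {i. i < length P \<and> dotp v (P!i) \<noteq> 0} = {d \<in> set P. dotp v d \<noteq> 0}"
  proof
    show "nth P ` {i. i < length P \<and> dotp v (P!i) \<noteq> 0} \<subseteq> {d \<in> set P. dotp v d \<noteq> 0}"
      using nth_mem by blast
    show "{d \<in> set P. dotp v d \<noteq> 0} \<subseteq> nth P ` {i. i < length P \<and> dotp v (P!i) \<noteq> 0}"
    proof
      fix d assume d: "d \<in> {d \<in> set P. dotp v d \<noteq> 0}"
      then obtain i where i: "i < length P" "P ! i = d" by (auto simp: in_set_conv_nth)
      then show "d \<in> nth P ` {i. i < length P \<and> dotp v (P!i) \<noteq> 0}" using d by blast
    qed
  qed
  have 4: "{d \<in> set P. dotp v d \<noteq> 0} = {d \<in> SL L. dotp v d \<noteq> 0}"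
    unfolding sP by (rule Collect_cong) auto
  show ?thesis unfolding hamming_wt_def 1 2 3 4 ..
qed

lemma dotp_SL_zero:
  assumes "\<forall>j\<in>L. v $ j = 0" "d \<in> SL L" shows "dotp v d = 0"
  unfolding dotp_def
proof (rule sum.neutral, rule ballI)
  fix i show "v $ i * d $ i = 0" using assms by (cases "i \<in> L") (auto simp: SL_def)
qed

lemma card_nonzero:
  fixes v :: "'a^'n"
  assumes "j \<in> L" "v $ j \<noteq> 0"
  shows "card {d \<in> SL L. dotp v d \<noteq> 0} = CARD('a) ^ card L - CARD('a) ^ (card L - 1)"
proof -
  have "{d \<in> SL L. dotp v d \<noteq> 0} = SL L - {d \<in> SL L. dotp v d = 0}" by auto
  moreover have "card (SL L - {d \<in> SL L. dotp v d = 0}) = card (SL L :: ('a^'n) set) - card {d \<in> SL L. dotp v d = 0}"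
    by (rule card_Diff_subset) auto
  ultimately have "card {d \<in> SL L. dotp v d \<noteq> 0} = card (SL L :: ('a^'n) set) - card {d \<in> SL L. dotp v d = 0}"
    by simp
  then show ?thesis using fiber0_SL[OF assms] card_SL[where 'a='a and L=L] by simp
qed

lemma wt_val: "hamming_wt (cP P v) =
   (if \<forall>j\<in>L. v $ j = 0 then 0 else CARD('a) ^ card L - CARD('a) ^ (card L - 1))"
proof (cases "\<forall>j\<in>L. v $ j = 0")
  case True
  then have "{d \<in> SL L. dotp v d \<noteq> 0} = {}" using dotp_SL_zero by auto
  then show ?thesis using True wt_cP by simp
next
  case False
  then obtain j where j: "j \<in> L" "v $ j \<noteq> 0" by auto
  show ?thesis by (simp only: wt_cP card_nonzero[OF j] if_not_P[OF False])
qed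

lemma cP_zero_iff: "cP P v = 0 \<longleftrightarrow> (\<forall>j\<in>L. v $ j = 0)"
proof
  assume a: "\<forall>j\<in>L. v $ j = 0"
  show "cP P v = 0"
  proof
    fix i
    show "cP P v i = 0 i"
    proof (cases "i < length P")
      case True
      then have "P ! i \<in> SL L" using sP nth_mem by blast
      then show ?thesis using True dotp_SL_zero[OF a] by (simp add: cP_def)
    qed (simp add: cP_def)
  qed
next
  assume z: "cP P v = 0"
  show "\<forall>j\<in>L. v $ j = 0"
  proof (rule ccontr)
    assume "\<not> (\<forall>j\<in>L. v $ j = 0)"
    then obtain j where j: "j \<in> L" "v $ j \<noteq> 0" by auto
    have "axis j 1 \<in> set P" using sP j by (auto simp: SL_def axis_def vec_eq_iff)
    then obtain i where i: "i < length P" "P ! i = axis j 1" by (auto simp: in_set_conv_nth)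
    have "cP P v i = v $ j" using i by (simp add: cP_def dotp_axis)
    then show False using z j by simp
  qed
qed

lemma cP_add: "cP P (u + v) = cP P u + cP P v"
  by (auto simp: cP_def fun_eq_iff dotp_add_left)

lemma cP_diff: "cP P (u - v) = cP P u - cP P v"
  by (auto simp: cP_def fun_eq_iff dotp_diff_left)

lemma cP_scale: "cP P (c *s v) = word_scale c (cP P v)"
  by (auto simp: cP_def fun_eq_iff dotp_scale_left word_scale_def)

lemma cP_0: "cP P 0 = 0"
  by (auto simp: cP_def fun_eq_iff)

lemma hw_zero_iff: "hamming_wt (cP P v) = 0 \<longleftrightarrow> cP P v = 0"
proof -
  have "finite {i. cP P v i \<noteq> 0}"
    by (rule finite_subset[of _ "{..<length P}"]) (auto simp: cP_def)
  then show ?thesis unfolding hamming_wt_def by (auto simp: fun_eq_iff)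
qed

lemma cP_out: "length P \<le> i \<Longrightarrow> cP P v i = 0"
  by (simp add: cP_def)

lemma lin: "linear_code (length P) (CP P)"
  unfolding linear_code_def CP_def
proof (intro conjI ballI allI)
  show "range (cP P) \<subseteq> {c. \<forall>i\<ge>length P. c i = 0}" using cP_out by blast
  have "0 = cP P 0" using cP_0 by simp
  then show "0 \<in> range (cP P)" by (rule image_eqI) simp
next
  fix x y assume "x \<in> range (cP P)" "y \<in> range (cP P)"
  then obtain u w where "x = cP P u" "y = cP P w" by blast
  then have "x + y = cP P (u + w)" by (simp add: cP_add)
  then show "x + y \<in> range (cP P)" by (rule image_eqI) simp
next
  fix a x assume "x \<in> range (cP P)"
  then obtain u where "x = cP P u" by blast
  then have "word_scale a x = cP P (a *s u)" by (simp add: cP_scale)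
  then show "word_scale a x \<in> range (cP P)" by (rule image_eqI) simp
qed

lemma fiber_card: "card {v. cP P v = cP P v0} = card {v. cP P v = 0}"
proof -
  have "bij_betw (\<lambda>v. v - v0) {v. cP P v = cP P v0} {v. cP P v = 0}"
    by (rule bij_betw_byWitness[where f'="\<lambda>v. v + v0"]) (auto simp: cP_diff cP_add)
  then show ?thesis by (rule bij_betw_same_card)
qed

lemma fibers_count:
  assumes fin: "finite (A :: ('a^'n) set)" and cl: "\<And>u v. u \<in> A \<Longrightarrow> cP P v = cP P u \<Longrightarrow> v \<in> A"
  shows "card A = card {v. cP P v = 0} * card (cP P ` A)"
proof -
  have "card A = (\<Sum>y\<in>cP P ` A. card {x\<in>A. cP P x = y})" by (rule card_fibers[OF fin])
  also have "\<dots> = (\<Sum>y\<in>cP P ` A. card {v. cP P v = 0})"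
  proof (rule sum.cong[OF refl])
    fix y assume "y \<in> cP P ` A"
    then obtain u where u: "u \<in> A" "y = cP P u" by auto
    then have "{x\<in>A. cP P x = y} = {v. cP P v = cP P u}" using cl by auto
    then show "card {x\<in>A. cP P x = y} = card {v. cP P v = 0}" using fiber_card by simp
  qed
  finally show ?thesis by simp
qed

end


lemma lc_add: "linear_code n C \<Longrightarrow> x \<in> C \<Longrightarrow> y \<in> C \<Longrightarrow> x + y \<in> C"
  unfolding linear_code_def by blast

lemma lc_scale: "linear_code n C \<Longrightarrow> x \<in> C \<Longrightarrow> word_scale a x \<in> C"
  unfolding linear_code_def by blast

lemma lc_zero: "linear_code n C \<Longrightarrow> 0 \<in> C"
  unfolding linear_code_def by blast

lemma lc_diff:
  fixes C :: "(nat \<Rightarrow> 'a::field) set"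
  assumes "linear_code n C" "x \<in> C" "y \<in> C" shows "x - y \<in> C"
proof -
  have e: "x - y = x + word_scale (-1) y" by (simp add: word_scale_def fun_eq_iff)
  show ?thesis unfolding e by (rule lc_add[OF assms(1,2)], rule lc_scale[OF assms(1,3)])
qed

lemma lc_supp: "linear_code n C \<Longrightarrow> c \<in> C \<Longrightarrow> n \<le> i \<Longrightarrow> c i = 0"
  unfolding linear_code_def by blast

lemma coord_count:
  fixes C :: "(nat \<Rightarrow> 'a::{field,finite}) set"
  assumes lc: "linear_code n C"
  shows "CARD('a) * card {c\<in>C. c i \<noteq> 0} \<le> (CARD('a) - 1) * card C"
proof (cases "\<exists>c0\<in>C. c0 i \<noteq> 0")
  case False
  then have "{c\<in>C. c i \<noteq> 0} = {}" by blast
  then have "card {c\<in>C. c i \<noteq> 0} = 0" by (simp only: card.empty)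
  then show ?thesis by simp
next
  case True
  then obtain c0 where c0: "c0 \<in> C" "c0 i \<noteq> 0" by blast
  have fin: "finite C" by (rule linear_code_finite[OF lc])
  define f where "f = card {c\<in>C. c i = 0}"
  have fib: "card {c\<in>C. c i = t} = f" for t
  proof -
    let ?s = "word_scale (t / c0 i) c0"
    have s: "?s \<in> C" by (rule lc_scale[OF lc c0(1)])
    have si: "?s i = t" using c0 by (simp add: word_scale_def)
    have "bij_betw (\<lambda>c. c + ?s) {c\<in>C. c i = 0} {c\<in>C. c i = t}"
    proof (rule bij_betw_byWitness[where f'="\<lambda>c. c - ?s"])
      show "\<forall>a\<in>{c \<in> C. c i = 0}. a + ?s - ?s = a" by simp
      show "\<forall>a\<in>{c \<in> C. c i = t}. a - ?s + ?s = a" by simp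
      show "(\<lambda>c. c + ?s) ` {c \<in> C. c i = 0} \<subseteq> {c \<in> C. c i = t}"
        using lc_add[OF lc _ s] si by auto
      show "(\<lambda>c. c - ?s) ` {c \<in> C. c i = t} \<subseteq> {c \<in> C. c i = 0}"
        using lc_diff[OF lc _ s] si by auto
    qed
    then show ?thesis unfolding f_def by (simp add: bij_betw_same_card)
  qed
  have img: "(\<lambda>c. c i) ` C = UNIV"
  proof -
    have "t \<in> (\<lambda>c. c i) ` C" for t
    proof -
      have "t = (\<lambda>c. c i) (word_scale (t / c0 i) c0)" using c0 by (simp add: word_scale_def)
      moreover have "word_scale (t / c0 i) c0 \<in> C" by (rule lc_scale[OF lc c0(1)])
      ultimately show ?thesis by (rule image_eqI)
    qed
    then show ?thesis by blast
  qed
  have "card C = (\<Sum>t\<in>(\<lambda>c. c i) ` C. card {c\<in>C. c i = t})" by (rule card_fibers[OF fin])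
  also have "\<dots> = CARD('a) * f" unfolding img fib by simp
  finally have N: "card C = CARD('a) * f" .
  have "{c\<in>C. c i \<noteq> 0} = C - {c\<in>C. c i = 0}" by blast
  then have "card {c\<in>C. c i \<noteq> 0} = card C - f" unfolding f_def
    by (simp add: card_Diff_subset fin)
  then have "card {c\<in>C. c i \<noteq> 0} = (CARD('a) - 1) * f" using N by (simp add: diff_mult_distrib)
  then show ?thesis using N by simp
qed

lemma wt_supp:
  assumes "linear_code n C" "c \<in> C"
  shows "hamming_wt c = card {i\<in>{..<n}. c i \<noteq> 0}"
proof -
  have "\<forall>i. c i \<noteq> 0 \<longrightarrow> i < n" using lc_supp[OF assms] not_le by blast
  then have "{i. c i \<noteq> 0} = {i\<in>{..<n}. c i \<noteq> 0}" by auto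
  then show ?thesis unfolding hamming_wt_def by simp
qed

lemma sum_wt:
  fixes C :: "(nat \<Rightarrow> 'a::{field,finite}) set"
  assumes lc: "linear_code n C"
  shows "CARD('a) * (\<Sum>c\<in>C. hamming_wt c) \<le> n * ((CARD('a) - 1) * card C)"
proof -
  have fin: "finite C" by (rule linear_code_finite[OF lc])
  have "(\<Sum>c\<in>C. hamming_wt c) = (\<Sum>c\<in>C. card {i\<in>{..<n}. c i \<noteq> 0})"
    using wt_supp[OF lc] by simp
  also have "\<dots> = (\<Sum>i\<in>{..<n}. card {c\<in>C. c i \<noteq> 0})"
    by (rule sum_multicount_gen[OF fin]) auto
  finally have e: "(\<Sum>c\<in>C. hamming_wt c) = (\<Sum>i\<in>{..<n}. card {c\<in>C. c i \<noteq> 0})" .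
  have "CARD('a) * (\<Sum>i\<in>{..<n}. card {c\<in>C. c i \<noteq> 0}) = (\<Sum>i\<in>{..<n}. CARD('a) * card {c\<in>C. c i \<noteq> 0})"
    by (simp add: sum_distrib_left)
  also have "\<dots> \<le> (\<Sum>i\<in>{..<n}. (CARD('a) - 1) * card C)"
    by (rule sum_mono) (rule coord_count[OF lc])
  also have "\<dots> = n * ((CARD('a) - 1) * card C)" by simp
  finally show ?thesis unfolding e .
qed

lemma dist_wt: "hamming_dist c c' = hamming_wt (c - (c' :: nat \<Rightarrow> 'a::ab_group_add))"
  unfolding hamming_dist_def hamming_wt_def by simp

lemma min_le_wt:
  fixes C :: "(nat \<Rightarrow> 'a::{field,finite}) set"
  assumes lc: "linear_code n C" and c: "c \<in> C" "c \<noteq> 0"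
  shows "min_dist C \<le> hamming_wt c"
proof -
  have fin: "finite C" by (rule linear_code_finite[OF lc])
  have "{hamming_dist c c' | c c'. c \<in> C \<and> c' \<in> C \<and> c \<noteq> c'} \<subseteq> (\<lambda>(x,y). hamming_dist x y) ` (C \<times> C)"
    by auto
  then have fs: "finite {hamming_dist c c' | c c'. c \<in> C \<and> c' \<in> C \<and> c \<noteq> c'}"
    by (rule finite_subset) (simp add: fin)
  have "hamming_dist c 0 \<in> {hamming_dist c c' | c c'. c \<in> C \<and> c' \<in> C \<and> c \<noteq> c'}"
    using c lc_zero[OF lc] by blast
  then have "min_dist C \<le> hamming_dist c 0" unfolding min_dist_def using fs by simp
  then show ?thesis by (simp add: dist_wt)
qed

lemma plotkin:
  fixes C :: "(nat \<Rightarrow> 'a::{field,finite}) set"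
  assumes lc: "linear_code n C"
  shows "CARD('a) * ((card C - 1) * min_dist C) \<le> n * ((CARD('a) - 1) * card C)"
proof -
  have fin: "finite C" by (rule linear_code_finite[OF lc])
  have z: "0 \<in> C" by (rule lc_zero[OF lc])
  have "(card C - 1) * min_dist C = (\<Sum>c\<in>C - {0}. min_dist C)"
    using fin z by simp
  also have "\<dots> \<le> (\<Sum>c\<in>C - {0}. hamming_wt c)"
    by (rule sum_mono) (rule min_le_wt[OF lc], auto)
  also have "\<dots> \<le> (\<Sum>c\<in>C. hamming_wt c)"
    by (rule sum_mono2[OF fin]) auto
  finally have "(card C - 1) * min_dist C \<le> (\<Sum>c\<in>C. hamming_wt c)" .
  then have "CARD('a) * ((card C - 1) * min_dist C) \<le> CARD('a) * (\<Sum>c\<in>C. hamming_wt c)"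
    by simp
  also have "\<dots> \<le> n * ((CARD('a) - 1) * card C)" by (rule sum_wt[OF lc])
  finally show ?thesis .
qed



lemma char2:
  assumes "CARD('a::{field,finite}) = 8"
  shows "(1::'a) + 1 = 0"
proof -
  have inj: "inj ((+) (1::'a))" by (simp add: inj_on_def)
  have surj: "range ((+) (1::'a)) = UNIV"
  proof -
    have "x \<in> range ((+) (1::'a))" for x
      by (rule image_eqI[of x _ "x - 1"]) simp_all
    then show ?thesis by blast
  qed
  have "(\<Sum>x\<in>(UNIV::'a set). x) = (\<Sum>x\<in>range ((+) (1::'a)). x)" by (simp only: surj)
  also have "\<dots> = (\<Sum>x\<in>(UNIV::'a set). 1 + x)" using sum.reindex[OF inj, of "\<lambda>x. x"] by (simp only: o_def)
  also have "\<dots> = of_nat CARD('a) + (\<Sum>x\<in>(UNIV::'a set). x)" by (simp add: sum.distrib)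
  finally have "of_nat CARD('a) = (0::'a)" by simp
  then have "(8::'a) = 0" using assms by simp
  then have "(2::'a)^3 = 0" by simp
  then have "(2::'a) = 0" using power_eq_0_iff[of "2::'a" 3] by blast
  then show ?thesis by simp
qed

context
  fixes \<omega> :: "'a::field"
  assumes c2: "(1::'a) + 1 = 0" and hw: "\<omega>^3 + \<omega> + 1 = 0"
begin

lemma xx: "x + x = (0::'a)"
proof -
  have "x + x = (1 + 1) * x" by (simp add: distrib_right)
  then show ?thesis using c2 by simp
qed

lemma neg_self: "- x = (x::'a)"
  using xx[of x] by (simp add: add_eq_0_iff)

lemma f1: "\<omega> \<noteq> 0"
  using hw by auto

lemma f2: "\<omega> \<noteq> 1"
proof
  assume "\<omega> = 1"
  then have "(1::'a) + 1 + 1 = 0" using hw by simp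
  then have "(1::'a) = 0" by (simp only: c2 add_0_left)
  then show False by simp
qed

lemma f3: "1 + \<omega> \<noteq> 0"
proof
  assume "1 + \<omega> = 0"
  have "\<omega> = (1 + \<omega>) - 1" by simp
  then have "\<omega> = 0 - 1" using \<open>1 + \<omega> = 0\<close> by (simp only:)
  then have "\<omega> = - 1" by simp
  then show False using f2 neg_self[of 1] by simp
qed

lemma f4: "1 + \<omega>^2 \<noteq> 0"
proof -
  have "(1 + \<omega>)^2 = 1 + (\<omega> + \<omega>) + \<omega>^2" by (simp add: power2_eq_square algebra_simps)
  then have "(1 + \<omega>)^2 = 1 + \<omega>^2" using xx[of \<omega>] by simp
  then show ?thesis using f3 by (metis power_not_zero)
qed

lemma f5: "\<omega> + \<omega>^2 \<noteq> 0"
proof -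
  have "\<omega> + \<omega>^2 = \<omega> * (1 + \<omega>)" by (simp add: power2_eq_square algebra_simps)
  then show ?thesis using f1 f3 by simp
qed

lemma f6: "1 + \<omega> + \<omega>^2 \<noteq> 0"
proof
  assume a: "1 + \<omega> + \<omega>^2 = 0"
  have "\<omega>^2 = (1 + \<omega> + \<omega>^2) - (1 + \<omega>)" by simp
  then have "\<omega>^2 = - (1 + \<omega>)" using a by simp
  then have s: "\<omega>^2 = 1 + \<omega>" using neg_self by simp
  have "\<omega>^3 = \<omega> * \<omega>^2" by (simp add: power3_eq_cube power2_eq_square)
  also have "\<dots> = \<omega> + \<omega> * \<omega>" using s by (simp add: algebra_simps)
  also have "\<dots> = \<omega> + \<omega>^2" by (simp add: power2_eq_square)
  also have "\<dots> = 1 + (\<omega> + \<omega>)" using s by (simp add: algebra_simps)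
  also have "\<dots> = 1" using xx by simp
  finally have "\<omega>^3 = 1" .
  then have "\<omega> + (1 + 1) = \<omega>^3 + \<omega> + 1" by (simp add: algebra_simps)
  then have "\<omega> + (1 + 1) = 0" using hw by simp
  then have "\<omega> = 0" by (simp only: c2 add_0_right)
  then show False using f1 by simp
qed

lemma comb0:
  assumes "e0 \<in> {0,1}" "e1 \<in> {0,1}" "e2 \<in> {0,1}" "e0 + \<omega> * e1 + \<omega>^2 * e2 = 0"
  shows "e0 = 0 \<and> e1 = 0 \<and> e2 = 0"
  using assms f1 f3 f4 f5 f6
  by (cases "e0 = 0"; cases "e1 = 0"; cases "e2 = 0") simp_all

lemma sub01: "a \<in> {0,1} \<Longrightarrow> b \<in> {0,1} \<Longrightarrow> a - b \<in> {0,(1::'a)}"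
  using neg_self[of 1] by auto

lemma inj3:
  assumes "a \<in> {0,1}" "b \<in> {0,1}" "c \<in> {0,1}" "a' \<in> {0,1}" "b' \<in> {0,1}" "c' \<in> {0,1}"
    and eq: "a + \<omega> * b + \<omega>^2 * c = a' + \<omega> * b' + \<omega>^2 * c'"
  shows "a = a' \<and> b = b' \<and> c = c'"
proof -
  have "(a - a') + \<omega> * (b - b') + \<omega>^2 * (c - c') = 0"
    using eq by (simp add: algebra_simps)
  then have "a - a' = 0 \<and> b - b' = 0 \<and> c - c' = 0"
    by (rule comb0[OF sub01[OF assms(1,4)] sub01[OF assms(2,5)] sub01[OF assms(3,6)]])
  then show ?thesis by simp
qed

end



lemma all_rep:
  fixes \<omega> :: "'a::{field,finite}"
  assumes card8: "CARD('a) = 8" and hw: "\<omega>^3 + \<omega> + 1 = 0"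
  shows "\<exists>a b c. a \<in> {0,1} \<and> b \<in> {0,1} \<and> c \<in> {0,1} \<and> x = a + \<omega> * b + \<omega>^2 * c"
proof -
  have c2: "(1::'a) + 1 = 0" by (rule char2[OF card8])
  let ?B = "{0::'a, 1}"
  let ?T = "?B \<times> ?B \<times> ?B"
  let ?F = "\<lambda>(a,b,c). a + \<omega> * b + \<omega>^2 * c"
  have inj: "inj_on ?F ?T"
  proof (rule inj_onI)
    fix x y assume x: "x \<in> ?T" and y: "y \<in> ?T" and e: "?F x = ?F y"
    obtain a b c where xa: "x = (a,b,c)" by (cases x) auto
    obtain a' b' c' where ya: "y = (a',b',c')" by (cases y) auto
    have m: "a \<in> {0,1}" "b \<in> {0,1}" "c \<in> {0,1}" "a' \<in> {0,1}" "b' \<in> {0,1}" "c' \<in> {0,1}"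
    proof -
      have "a \<in> ?B \<and> b \<in> ?B \<and> c \<in> ?B" using x unfolding xa by (simp only: mem_Sigma_iff)
      moreover have "a' \<in> ?B \<and> b' \<in> ?B \<and> c' \<in> ?B" using y unfolding ya by (simp only: mem_Sigma_iff)
      ultimately show "a \<in> {0,1}" "b \<in> {0,1}" "c \<in> {0,1}" "a' \<in> {0,1}" "b' \<in> {0,1}" "c' \<in> {0,1}"
        by blast+
    qed
    have e': "a + \<omega> * b + \<omega>^2 * c = a' + \<omega> * b' + \<omega>^2 * c'" using e unfolding xa ya by simp
    have "a = a' \<and> b = b' \<and> c = c'"
      by (rule inj3[OF c2 hw m e'])
    then show "x = y" using xa ya by simp
  qed
  have "card ?B = 2" by simp
  then have "card ?T = 8" by (simp add: card_cartesian_product)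
  then have "card (?F ` ?T) = CARD('a)" using card_image[OF inj] card8 by simp
  then have "?F ` ?T = UNIV" by (intro card_subset_eq) auto
  then have "x \<in> ?F ` ?T" by simp
  then obtain t where t: "t \<in> ?T" "x = ?F t" by blast
  obtain a b c where tabc: "t = (a,b,c)" by (cases t) auto
  have "a \<in> ?B \<and> b \<in> ?B \<and> c \<in> ?B" using t(1) unfolding tabc by (simp only: mem_Sigma_iff)
  moreover have "x = a + \<omega> * b + \<omega>^2 * c" using t(2) unfolding tabc by simp
  ultimately show ?thesis by blast
qed

lemma SL_eq:
  fixes \<omega> :: "'a::{field,finite}" and L :: "'n::finite set"
  assumes card8: "CARD('a) = 8" and hw: "\<omega>^3 + \<omega> + 1 = 0"
  shows "sum3 \<omega> (Delta L) (Delta L) (Delta L) = (SL L :: ('a^'n) set)"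
proof
  show "sum3 \<omega> (Delta L) (Delta L) (Delta L) \<subseteq> SL L"
  proof
    fix x assume "x \<in> sum3 \<omega> (Delta L) (Delta L) (Delta L)"
    then obtain a b c where x: "x = (\<chi> i. a $ i + \<omega> * b $ i + \<omega>^2 * c $ i)"
      and abc: "a \<in> Delta L" "b \<in> Delta L" "c \<in> Delta L"
      unfolding sum3_def by blast
    show "x \<in> SL L" unfolding SL_def
    proof (intro CollectI allI impI)
      fix i assume i: "i \<notin> L"
      have "a $ i = 0" "b $ i = 0" "c $ i = 0" using abc i unfolding Delta_def by auto
      then show "x $ i = 0" unfolding x by simp
    qed
  qed
next
  show "SL L \<subseteq> sum3 \<omega> (Delta L) (Delta L) (Delta L)"
  proof
    fix v :: "'a^'n" assume v: "v \<in> SL L"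
    define R where "R = (\<lambda>y::'a. SOME t. fst t \<in> {0,1} \<and> fst (snd t) \<in> {0,1} \<and> snd (snd t) \<in> {0,1}
        \<and> y = fst t + \<omega> * fst (snd t) + \<omega>^2 * snd (snd t))"
    define R' where "R' = (\<lambda>y::'a. if y = 0 then (0,0,0) else R y)"
    have R': "fst (R' y) \<in> {0,1} \<and> fst (snd (R' y)) \<in> {0,1} \<and> snd (snd (R' y)) \<in> {0,1}
        \<and> y = fst (R' y) + \<omega> * fst (snd (R' y)) + \<omega>^2 * snd (snd (R' y))" for y
    proof (cases "y = 0")
      case True then show ?thesis unfolding R'_def by simp
    next
      case False
      obtain a b c where "a \<in> {0,1} \<and> b \<in> {0,1} \<and> c \<in> {0,1} \<and> y = a + \<omega> * b + \<omega>^2 * c"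
        using all_rep[OF card8 hw] by blast
      then have "\<exists>t. fst t \<in> {0,1} \<and> fst (snd t) \<in> {0,1} \<and> snd (snd t) \<in> {0,1}
        \<and> y = fst t + \<omega> * fst (snd t) + \<omega>^2 * snd (snd t)" by (intro exI[of _ "(a,b,c)"]) simp
      then have "fst (R y) \<in> {0,1} \<and> fst (snd (R y)) \<in> {0,1} \<and> snd (snd (R y)) \<in> {0,1}
        \<and> y = fst (R y) + \<omega> * fst (snd (R y)) + \<omega>^2 * snd (snd (R y))"
        unfolding R_def by (rule someI_ex)
      then show ?thesis using False unfolding R'_def by simp
    qed
    have R1: "fst (R' y) \<in> {0,1}" for y using R' by blast
    have R2: "fst (snd (R' y)) \<in> {0,1}" for y using R' by blast
    have R3: "snd (snd (R' y)) \<in> {0,1}" for y using R' by blast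
    have R4: "fst (R' y) + \<omega> * fst (snd (R' y)) + \<omega>^2 * snd (snd (R' y)) = y" for y
      using R'[of y] by (elim conjE) (erule sym)
    define a where "a = (\<chi> i. fst (R' (v $ i)))"
    define b where "b = (\<chi> i. fst (snd (R' (v $ i))))"
    define c where "c = (\<chi> i. snd (snd (R' (v $ i))))"
    have z: "R' 0 = (0,0,0)" unfolding R'_def by simp
    have vi: "i \<notin> L \<Longrightarrow> R' (v $ i) = (0,0,0)" for i using v z unfolding SL_def by auto
    have "a \<in> Delta L" unfolding Delta_def a_def using R1 vi by fastforce
    moreover have "b \<in> Delta L" unfolding Delta_def b_def using R2 vi by fastforce
    moreover have "c \<in> Delta L" unfolding Delta_def c_def using R3 vi by fastforce
    moreover have "v = (\<chi> i. a $ i + \<omega> * b $ i + \<omega>^2 * c $ i)"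
      unfolding a_def b_def c_def vec_eq_iff by (simp only: vec_lambda_beta R4) simp
    ultimately show "v \<in> sum3 \<omega> (Delta L) (Delta L) (Delta L)" unfolding sum3_def by blast
  qed
qed



lemma geo8: "7 * (\<Sum>i<k. (8::nat)^i) = 8^k - 1"
proof (induction k)
  case 0 then show ?case by simp
next
  case (Suc k)
  have "7 * (\<Sum>i<Suc k. (8::nat)^i) = 7 * (\<Sum>i<k. 8^i) + 7 * 8^k" by simp
  also have "\<dots> = 8^k - 1 + 7 * 8^k" using Suc by simp
  also have "\<dots> = 8^Suc k - 1" using one_le_power[of "8::nat" k] by simp
  finally show ?case .
qed

lemma griesmer_sum:
  assumes "k \<ge> 1"
  shows "(\<Sum>i<k. \<lceil>real (7 * 2^(3 * (k - 1))) / real (8::nat) ^ i\<rceil>) = int (2^(3 * k) - 1)"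
proof -
  have p8: "(2::nat)^(3*m) = 8^m" for m by (simp add: power_mult)
  have t: "\<lceil>real (7 * 2^(3 * (k - 1))) / real (8::nat) ^ i\<rceil> = int (7 * 8^(k - Suc i))" if "i < k" for i
  proof -
    have "(8::nat)^(k-1) = 8^(k - Suc i) * 8^i" using that by (simp add: power_add[symmetric])
    then have "real (7 * 2^(3 * (k - 1))) = real (7 * 8^(k - Suc i)) * real (8::nat) ^ i"
      unfolding p8 by simp
    then have "real (7 * 2^(3 * (k - 1))) / real (8::nat) ^ i = real (7 * 8^(k - Suc i))" by simp
    then show ?thesis by (simp only: ceiling_of_nat)
  qed
  have "(\<Sum>i<k. \<lceil>real (7 * 2^(3 * (k - 1))) / real (8::nat) ^ i\<rceil>) = (\<Sum>i<k. int (7 * 8^(k - Suc i)))"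
    by (rule sum.cong[OF refl], rule t) simp
  also have "\<dots> = int (\<Sum>i<k. 7 * 8^(k - Suc i))" by simp
  also have "(\<Sum>i<k. 7 * (8::nat)^(k - Suc i)) = (\<Sum>i<k. 7 * 8^i)"
    by (rule sum.nat_diff_reindex)
  also have "\<dots> = 7 * (\<Sum>i<k. 8^i)" by (simp add: sum_distrib_left)
  also have "\<dots> = 8^k - 1" by (rule geo8)
  also have "(8::nat)^k = 2^(3*k)" by (simp add: p8)
  finally show ?thesis .
qed



context
  fixes \<omega> :: "'a::{field,finite}" and L :: "'n::finite set" and P :: "('a ^ 'n) list"
  assumes card8: "CARD('a) = 8"
    and hw: "\<omega>^3 + \<omega> + 1 = 0"
    and Lne: "L \<noteq> {}"
    and dP: "distinct P"
    and sP0: "set P = sum3 \<omega> (Delta L) (Delta L) (Delta L) - {0}"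
begin

lemma sP: "set P = SL L - {0}"
  using sP0 SL_eq[OF card8 hw, of L] by simp

lemma kpos: "card L \<ge> 1"
  using Lne by (simp add: Suc_le_eq card_gt_0_iff)

lemma p8: "(2::nat)^(3*m) = 8^m"
  by (simp add: power_mult)

lemma Wval: "CARD('a) ^ card L - CARD('a) ^ (card L - 1) = 7 * 2^(3 * (card L - 1))"
proof -
  have "(8::nat) ^ card L = 8 * 8 ^ (card L - 1)" using kpos
    by (metis Suc_diff_le diff_Suc_1 power_Suc)
  then show ?thesis unfolding card8 p8 by simp
qed

lemma wt_cases: "hamming_wt (cP P v) = (if \<forall>j\<in>L. v $ j = 0 then 0 else 7 * 2^(3 * (card L - 1)))"
  using wt_val[OF dP sP, of v] Wval by simp

lemma len: "length P = 2^(3 * card L) - 1"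
proof -
  have "length P = card (set P)" using dP by (simp add: distinct_card)
  also have "\<dots> = card (SL L :: ('a^'n) set) - 1"
    unfolding sP by (rule card_Diff_singleton) (simp add: SL_def)
  also have "\<dots> = 2^(3 * card L) - 1" using card_SL[where 'a='a and L=L] card8 p8 by simp
  finally show ?thesis .
qed

lemma nz_wt: "c \<in> CP P \<Longrightarrow> c \<noteq> 0 \<Longrightarrow> hamming_wt c = 7 * 2^(3 * (card L - 1))"
proof -
  assume c: "c \<in> CP P" "c \<noteq> 0"
  then obtain v where v: "c = cP P v" unfolding CP_def by blast
  then have "\<not> (\<forall>j\<in>L. v $ j = 0)" using c cP_zero_iff[OF dP sP, of v] by simp
  then show ?thesis using v wt_cases by simp
qed

lemma ow: "one_weight (CP P)"
  unfolding one_weight_def using nz_wt by blast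

lemma Z0: "card {v. hamming_wt (cP P v) = 0} = 2^(3 * (CARD('n) - card L))"
proof -
  have "{v. hamming_wt (cP P v) = 0} = {v::'a^'n. cP P v = 0}"
    using hw_zero_iff[OF dP sP] by blast
  also have "\<dots> = SL (UNIV - L)"
    using cP_zero_iff[OF dP sP] unfolding SL_def by auto
  finally have e: "{v. hamming_wt (cP P v) = 0} = SL (UNIV - L)" .
  have "card (UNIV - L) = CARD('n) - card L" by (simp add: card_Diff_subset)
  then show ?thesis unfolding e using card_SL[where 'a='a and L="UNIV - L"] card8 p8 by simp
qed

lemma Z0': "card {v. cP P v = 0} = 8^(CARD('n) - card L)"
proof -
  have "{v. hamming_wt (cP P v) = 0} = {v::'a^'n. cP P v = 0}"
    using hw_zero_iff[OF dP sP] by blast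
  then show ?thesis using Z0 p8 by simp
qed

lemma cardC: "card (CP P) = 8 ^ card L"
proof -
  have "card (UNIV :: ('a^'n) set) = card {v. cP P v = 0} * card (cP P ` UNIV)"
    by (rule fibers_count[OF dP sP]) auto
  moreover have "card (UNIV :: ('a^'n) set) = 8 ^ CARD('n)"
  proof -
    have "(UNIV :: ('a^'n) set) = SL UNIV" unfolding SL_def by simp
    then show ?thesis using card_SL[where 'a='a and L="UNIV::'n set"] card8 by simp
  qed
  moreover have "card L \<le> CARD('n)" by (rule card_mono) auto
  then have "(8::nat) ^ CARD('n) = 8^(CARD('n) - card L) * 8 ^ card L"
    by (simp add: power_add[symmetric])
  ultimately have "8^(CARD('n) - card L) * 8 ^ card L = 8^(CARD('n) - card L) * card (CP P)"
    unfolding CP_def Z0' by simp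
  then show ?thesis by simp
qed

lemma dimC: "code_dim (CP P) = card L"
proof -
  have lc: "linear_code (length P) (CP P)" by (rule lin[OF dP sP])
  have "card (CP P) = CARD('a) ^ ws.dim (CP P)"
    by (rule card_subspace[OF linear_code_finite[OF lc] linear_code_subspace[OF lc]])
  then have "(8::nat) ^ ws.dim (CP P) = 8 ^ card L" using cardC card8 by simp
  then show ?thesis unfolding code_dim_def by simp
qed

lemma mdC: "min_dist (CP P) = 7 * 2^(3 * (card L - 1))"
proof -
  let ?W = "7 * 2^(3 * (card L - 1)) :: nat"
  have "{hamming_dist c c' | c c'. c \<in> CP P \<and> c' \<in> CP P \<and> c \<noteq> c'} = {?W}"
  proof
    show "{hamming_dist c c' | c c'. c \<in> CP P \<and> c' \<in> CP P \<and> c \<noteq> c'} \<subseteq> {?W}"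
    proof
      fix x assume "x \<in> {hamming_dist c c' | c c'. c \<in> CP P \<and> c' \<in> CP P \<and> c \<noteq> c'}"
      then obtain c c' where cc: "x = hamming_dist c c'" "c \<in> CP P" "c' \<in> CP P" "c \<noteq> c'" by blast
      have "c - c' \<in> CP P" by (rule lc_diff[OF lin[OF dP sP] cc(2,3)])
      moreover have "c - c' \<noteq> 0" using cc(4) by simp
      ultimately have "hamming_wt (c - c') = ?W" by (rule nz_wt)
      then show "x \<in> {?W}" using cc(1) by (simp add: dist_wt)
    qed
    show "{?W} \<subseteq> {hamming_dist c c' | c c'. c \<in> CP P \<and> c' \<in> CP P \<and> c \<noteq> c'}"
    proof -
      obtain j where j: "j \<in> L" using Lne by blast
      let ?c = "cP P (axis j (1::'a))"
      have c1: "?c \<in> CP P" unfolding CP_def by simp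
      have c0: "0 \<in> CP P" by (rule lc_zero[OF lin[OF dP sP]])
      have cn: "?c \<noteq> 0" using cP_zero_iff[OF dP sP, of "axis j 1"] j by (simp add: axis_def)
      have hd: "hamming_dist ?c 0 = ?W" using nz_wt[OF c1 cn] by (simp add: dist_wt)
      show ?thesis
      proof (rule subsetI)
        fix x :: nat assume "x \<in> {?W}"
        then have "x = hamming_dist ?c 0" using hd by simp
        then show "x \<in> {hamming_dist c c' | c c'. c \<in> CP P \<and> c' \<in> CP P \<and> c \<noteq> c'}"
          using c1 c0 cn by blast
      qed
    qed
  qed
  then show ?thesis unfolding min_dist_def by simp
qed

lemma nkd: "is_nkd_code (2^(3 * card L) - 1) (card L) (7 * 2^(3 * (card L - 1))) (CP P)"
  unfolding is_nkd_code_def using lin[OF dP sP] len dimC mdC by simp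

end



context
  fixes \<omega> :: "'a::{field,finite}" and L :: "'n::finite set" and P :: "('a ^ 'n) list"
  assumes card8: "CARD('a) = 8"
    and hw: "\<omega>^3 + \<omega> + 1 = 0"
    and Lne: "L \<noteq> {}"
    and dP: "distinct P"
    and sP0: "set P = sum3 \<omega> (Delta L) (Delta L) (Delta L) - {0}"
begin

lemma sP': "set P = SL L - {0}"
  by (rule sP[OF card8 hw Lne dP sP0])

lemma minC: "minimal_code (CP P)"
  unfolding minimal_code_def
proof (intro ballI impI)
  fix c assume c: "c \<in> CP P" "c \<noteq> 0"
  then obtain v where v: "c = cP P v" unfolding CP_def by blast
  then have "\<not> (\<forall>j\<in>L. v $ j = 0)" using c cP_zero_iff[OF dP sP', of v] by simp
  then obtain j where j: "j \<in> L" "v $ j \<noteq> 0" by blast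
  show "minimal_codeword (CP P) c"
    unfolding minimal_codeword_def
  proof (intro conjI ballI impI)
    show "c \<in> CP P" "c \<noteq> 0" using c by auto
  next
    fix c' assume c': "c' \<in> CP P" "c' \<noteq> 0 \<and> code_supp c' \<subseteq> code_supp c"
    then obtain u where u: "c' = cP P u" unfolding CP_def by blast
    define a where "a = u $ j / v $ j"
    define w where "w = u - a *s v"
    have wj: "w $ j = 0" using j unfolding w_def a_def by simp
    have wL: "\<forall>l\<in>L. w $ l = 0"
    proof (rule ccontr)
      assume "\<not> (\<forall>l\<in>L. w $ l = 0)"
      then obtain l where l: "l \<in> L" "w $ l \<noteq> 0" by blast
      have lj: "l \<noteq> j" using l wj by auto
      define d where "d = axis l (1::'a) + axis j (- (v $ l) / v $ j)"
      have dSL: "d \<in> SL L" using l j unfolding d_def SL_def axis_def by auto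
      have dl: "d $ l = 1" using lj unfolding d_def axis_def by simp
      then have "d \<noteq> 0" by auto
      then have "d \<in> set P" using dSL sP' by simp
      then obtain i where i: "i < length P" "P ! i = d" by (auto simp: in_set_conv_nth)
      have dv: "dotp v d = 0" using j unfolding d_def dotp_add dotp_axis by simp
      have dw: "dotp w d = w $ l" using wj unfolding d_def dotp_add dotp_axis by simp
      have "c i = 0" using v i dv by (simp add: cP_def)
      then have "i \<notin> code_supp c" by (simp add: code_supp_def)
      then have "i \<notin> code_supp c'" using c' by blast
      then have "c' i = 0" by (simp add: code_supp_def)
      then have du: "dotp u d = 0" using u i by (simp add: cP_def)
      have "dotp w d = dotp u d - a * dotp v d" unfolding w_def by (simp add: dotp_diff_left dotp_scale_left)
      then have "dotp w d = 0" using du dv by simp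
      then show False using dw l by simp
    qed
    have "cP P w = 0" using cP_zero_iff[OF dP sP'] wL by blast
    moreover have "u = w + a *s v" unfolding w_def by simp
    ultimately have "cP P u = word_scale a (cP P v)"
      using cP_add[OF dP sP'] cP_scale[OF dP sP'] by simp
    then show "\<exists>a. c' = word_scale a c" using u v by blast
  qed
qed

lemma griesC: "griesmer_code (2^(3 * card L) - 1) (card L) (7 * 2^(3 * (card L - 1))) (CP P)"
  unfolding griesmer_code_def
  using nkd[OF card8 hw Lne dP sP0] griesmer_sum[OF kpos[OF card8 hw Lne dP sP0]] card8 by simp

lemma optC: "distance_optimal (2^(3 * card L) - 1) (card L) (7 * 2^(3 * (card L - 1))) (CP P)"
  unfolding distance_optimal_def
proof (intro conjI notI)
  show "is_nkd_code (2^(3 * card L) - 1) (card L) (7 * 2^(3 * (card L - 1))) (CP P)"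
    by (rule nkd[OF card8 hw Lne dP sP0])
next
  assume "\<exists>C' :: (nat \<Rightarrow> 'a) set. is_nkd_code (2^(3 * card L) - 1) (card L) (7 * 2^(3 * (card L - 1)) + 1) C'"
  then obtain C' :: "(nat \<Rightarrow> 'a) set" where C': "is_nkd_code (2^(3 * card L) - 1) (card L) (7 * 2^(3 * (card L - 1)) + 1) C'"
    by blast
  let ?k = "card L"
  have k1: "?k \<ge> 1" by (rule kpos[OF card8 hw Lne dP sP0])
  have lc: "linear_code (2^(3 * ?k) - 1) C'" and dm: "code_dim C' = ?k"
    and md: "min_dist C' = 7 * 2^(3 * (?k - 1)) + 1"
    using C' unfolding is_nkd_code_def by auto
  have "card C' = CARD('a) ^ ws.dim C'"
    by (rule card_subspace[OF linear_code_finite[OF lc] linear_code_subspace[OF lc]])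
  then have N: "card C' = 8 ^ ?k" using dm card8 unfolding code_dim_def by simp
  have pl: "CARD('a) * ((card C' - 1) * min_dist C') \<le> (2^(3 * ?k) - 1) * ((CARD('a) - 1) * card C')"
    by (rule plotkin[OF lc])
  define X where "X = (8::nat) ^ (?k - 1)"
  have X8: "(8::nat) ^ ?k = 8 * X" unfolding X_def using k1
    by (metis Suc_diff_le diff_Suc_1 power_Suc)
  have p2: "(2::nat)^(3 * ?k) = 8 * X" "(2::nat)^(3 * (?k - 1)) = X"
    using X8 unfolding X_def by (simp_all add: power_mult)
  have Xp: "X \<ge> 1" unfolding X_def by simp
  have "8 * ((8 * X - 1) * (7 * X + 1)) \<le> (8 * X - 1) * (7 * (8 * X))"
    using pl unfolding N md card8 p2 X8 by simp
  moreover have "(8 * X - 1) * (7 * (8 * X)) < 8 * ((8 * X - 1) * (7 * X + 1))"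
  proof -
    have pos: "8 * X - 1 > 0" using Xp by simp
    have "7 * (8 * X) < 8 * (7 * X + 1)" by simp
    then have "(8 * X - 1) * (7 * (8 * X)) < (8 * X - 1) * (8 * (7 * X + 1))"
      using pos by (rule mult_strict_left_mono)
    then show ?thesis by (simp add: algebra_simps)
  qed
  ultimately show False using leD by blast
qed

lemma distC: "\<forall>i\<le>length P. card {v. hamming_wt (cP P v) = i}
          = card {v. hamming_wt (cP P v) = 0} * card {c\<in>CP P. hamming_wt c = i}"
proof (intro allI impI)
  fix i
  have "{v. hamming_wt (cP P v) = 0} = {v::'a^'n. cP P v = 0}"
    using hw_zero_iff[OF dP sP'] by blast
  moreover have "card {v. hamming_wt (cP P v) = i} = card {v::'a^'n. cP P v = 0} * card (cP P ` {v. hamming_wt (cP P v) = i})"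
    by (rule fibers_count[OF dP sP']) auto
  moreover have "cP P ` {v. hamming_wt (cP P v) = i} = {c\<in>CP P. hamming_wt c = i}"
    unfolding CP_def by auto
  ultimately show "card {v. hamming_wt (cP P v) = i}
          = card {v. hamming_wt (cP P v) = 0} * card {c\<in>CP P. hamming_wt c = i}" by simp
qed

end

theorem mainTheorem4:
  fixes \<omega> :: "'a::{field,finite}" and L :: "'n::finite set" and P :: "('a ^ 'n) list"
  assumes "CARD('a) = 8"
    and "\<omega>^3 + \<omega> + 1 = 0"
    and "L \<noteq> {}" and "L \<noteq> UNIV"
    and "distinct P"
    and "set P = sum3 \<omega> (Delta L) (Delta L) (Delta L) - {0}"
  shows "one_weight (CP P)
    \<and> is_nkd_code (2^(3 * card L) - 1) (card L) (7 * 2^(3 * (card L - 1))) (CP P)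
    \<and> length P = 2^(3 * card L) - 1
    \<and> minimal_code (CP P)
    \<and> griesmer_code (2^(3 * card L) - 1) (card L) (7 * 2^(3 * (card L - 1))) (CP P)
    \<and> distance_optimal (2^(3 * card L) - 1) (card L) (7 * 2^(3 * (card L - 1))) (CP P)
    \<and> card {v. hamming_wt (cP P v) = 0} = 2^(3 * (CARD('n) - card L))
    \<and> (\<forall>i\<le>length P. card {v. hamming_wt (cP P v) = i}
          = card {v. hamming_wt (cP P v) = 0} * card {c\<in>CP P. hamming_wt c = i})"
  using ow[OF assms(1,2,3,5,6)] nkd[OF assms(1,2,3,5,6)] len[OF assms(1,2,3,5,6)]
    minC[OF assms(1,2,3,5,6)] griesC[OF assms(1,2,3,5,6)] optC[OF assms(1,2,3,5,6)]
    Z0[OF assms(1,2,3,5,6)] distC[OF assms(1,2,3,5,6)]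
  by blast


end
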